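(* For all bunches $\Delta$ and formulas $\varphi,\psi$: if $\Delta\vdash_{\mathsf{cf}}\varphi-\!\!\ast\,\psi$ then $\Delta\mathbin{,}\varphi\vdash_{\mathsf{cf}}\psi$; and if $\Delta\vdash_{\mathsf{cf}}\varphi\to\psi$ then $\Delta\mathbin{;}\varphi\vdash_{\mathsf{cf}}\psi$.
   Context: Formulas of BI: $\varphi,\psi ::= \top \mid \bot \mid \varphi\wedge\psi \mid \varphi\vee\psi \mid \varphi\to\psi \mid \mathsf{emp} \mid \varphi\ast\psi \mid \varphi -\!\!\ast\, \psi \mid a$, $a\in\mathrm{Atom}$. Bunches are finite binary trees whose leaves are formulas or empty bunches $\varnothing_m,\varnothing_a$ and whose internal nodes are labelled by the multiplicative comma ($\Delta_1\mathbin{,}\Delta_2$) or the additive semicolon ($\Delta_1\mathbin{;}\Delta_2$). A bunched context $\Delta(-)$ is a bunch with one leaf replaced by a hole; $\Delta(\Gamma)$ fills it with $\Gamma$. Bunch equivalence $\equiv$ is the least equivalence relation making $\mathbin{,}$ commutative, associative with unit $\varnothing_m$, $\mathbin{;}$ commutative, associative with unit $\varnothing_a$, and closed under contexts. The cut-free BI sequent calculus ($\Delta\vdash_{\mathsf{cf}}\varphi$) has the rules: (ax) $a\vdash a$ for atoms $a$; (equiv) from $\Delta'\vdash\varphi$, $\Delta\equiv\Delta'$ infer $\Delta\vdash\varphi$; (W;) from $\Delta(\Delta_1)\vdash\varphi$ infer $\Delta(\Delta_1\mathbin{;}\Delta_2)\vdash\varphi$; (C;) from $\Delta(\Delta_1\mathbin{;}\Delta_1)\vdash\varphi$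 infer $\Delta(\Delta_1)\vdash\varphi$; (empR) $\varnothing_m\vdash\mathsf{emp}$; (empL) from $\Delta(\varnothing_m)\vdash\varphi$ infer $\Delta(\mathsf{emp})\vdash\varphi$; ($\ast$R) from $\Delta_1\vdash\varphi$, $\Delta_2\vdash\psi$ infer $\Delta_1\mathbin{,}\Delta_2\vdash\varphi\ast\psi$; ($\ast$L) from $\Delta(\varphi\mathbin{,}\psi)\vdash\chi$ infer $\Delta(\varphi\ast\psi)\vdash\chi$; ($-\!\ast$R) from $\Delta\mathbin{,}\varphi\vdash\psi$ infer $\Delta\vdash\varphi-\!\!\ast\,\psi$; ($-\!\ast$L) from $\Delta_1\vdash\varphi$, $\Delta(\Delta_2\mathbin{,}\psi)\vdash\chi$ infer $\Delta((\Delta_1\mathbin{,}\Delta_2)\mathbin{,}(\varphi-\!\!\ast\,\psi))\vdash\chi$; ($\top$R) $\varnothing_a\vdash\top$; ($\top$L) from $\Delta(\varnothing_a)\vdash\varphi$ infer $\Delta(\top)\vdash\varphi$; ($\wedge$R) from $\Delta_1\vdash\varphi$, $\Delta_2\vdash\psi$ infer $\Delta_1\mathbin{;}\Delta_2\vdash\varphi\wedge\psi$; ($\wedge$L) from $\Delta(\varphi\mathbin{;}\psi)\vdash\chi$ infer $\Delta(\varphi\wedge\psi)\vdash\chi$; ($\to$R) from $\Delta\mathbin{;}\varphi\vdash\psi$ infer $\Delta\vdash\varphi\to\psi$; ($\to$L) from $\Delta_1\vdash\varphi$, $\Delta(\Delta_2\mathbin{;}\psi)\vdash\chi$ infer $\Delta((\Delta_1\mathbin{;}\Delta_2)\mathbin{;}(\varphi\to\psi))\vdash\chi$;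 ($\bot$L) $\Delta(\bot)\vdash\varphi$; ($\vee$R1/2) from $\Delta\vdash\varphi$ (resp. $\Delta\vdash\psi$) infer $\Delta\vdash\varphi\vee\psi$; ($\vee$L) from $\Delta(\varphi)\vdash\chi$, $\Delta(\psi)\vdash\chi$ infer $\Delta(\varphi\vee\psi)\vdash\chi$. (No cut rule.) A formula used as a bunch denotes the single-leaf bunch. *)

theory Defs
  imports Main
begin

datatype 'a form =
    FTop | FBot | FAnd "'a form" "'a form" | FOr "'a form" "'a form"
  | FImp "'a form" "'a form" | FEmp | FStar "'a form" "'a form"
  | FWand "'a form" "'a form" | FAtom 'a

datatype 'a bunch =
    BForm "'a form" | EmpM | EmpA
  | Comma "'a bunch" "'a bunch" | Semi "'a bunch" "'a bunch"

datatype 'a bctx =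
    Hole
  | CommaL "'a bctx" "'a bunch" | CommaR "'a bunch" "'a bctx"
  | SemiL "'a bctx" "'a bunch" | SemiR "'a bunch" "'a bctx"

primrec fill :: "'a bctx \<Rightarrow> 'a bunch \<Rightarrow> 'a bunch" where
  "fill Hole G = G"
| "fill (CommaL C D) G = Comma (fill C G) D"
| "fill (CommaR D C) G = Comma D (fill C G)"
| "fill (SemiL C D) G = Semi (fill C G) D"
| "fill (SemiR D C) G = Semi D (fill C G)"

inductive beq :: "'a bunch \<Rightarrow> 'a bunch \<Rightarrow> bool" where
  refl: "beq D D"
| sym: "beq D E \<Longrightarrow> beq E D"
| trans: "beq D E \<Longrightarrow> beq E F \<Longrightarrow> beq D F"
| comma_comm: "beq (Comma D E) (Comma E D)"
| comma_assoc: "beq (Comma D (Comma E F)) (Comma (Comma D E) F)"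
| comma_unit: "beq (Comma D EmpM) D"
| semi_comm: "beq (Semi D E) (Semi E D)"
| semi_assoc: "beq (Semi D (Semi E F)) (Semi (Semi D E) F)"
| semi_unit: "beq (Semi D EmpA) D"
| ctx: "beq D E \<Longrightarrow> beq (fill C D) (fill C E)"

inductive cf :: "'a bunch \<Rightarrow> 'a form \<Rightarrow> bool" where
  ax: "cf (BForm (FAtom a)) (FAtom a)"
| equiv: "cf D' phi \<Longrightarrow> beq D D' \<Longrightarrow> cf D phi"
| weakS: "cf (fill C D1) phi \<Longrightarrow> cf (fill C (Semi D1 D2)) phi"
| contrS: "cf (fill C (Semi D1 D1)) phi \<Longrightarrow> cf (fill C D1) phi"
| empR: "cf EmpM FEmp"
| empL: "cf (fill C EmpM) phi \<Longrightarrow> cf (fill C (BForm FEmp)) phi"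
| starR: "cf D1 phi \<Longrightarrow> cf D2 psi \<Longrightarrow> cf (Comma D1 D2) (FStar phi psi)"
| starL: "cf (fill C (Comma (BForm phi) (BForm psi))) chi \<Longrightarrow> cf (fill C (BForm (FStar phi psi))) chi"
| wandR: "cf (Comma D (BForm phi)) psi \<Longrightarrow> cf D (FWand phi psi)"
| wandL: "cf D1 phi \<Longrightarrow> cf (fill C (Comma D2 (BForm psi))) chi \<Longrightarrow>
          cf (fill C (Comma (Comma D1 D2) (BForm (FWand phi psi)))) chi"
| topR: "cf EmpA FTop"
| topL: "cf (fill C EmpA) phi \<Longrightarrow> cf (fill C (BForm FTop)) phi"
| andR: "cf D1 phi \<Longrightarrow> cf D2 psi \<Longrightarrow> cf (Semi D1 D2) (FAnd phi psi)"
| andL: "cf (fill C (Semi (BForm phi) (BForm psi))) chi \<Longrightarrow> cf (fill C (BForm (FAnd phi psi))) chi"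
| impR: "cf (Semi D (BForm phi)) psi \<Longrightarrow> cf D (FImp phi psi)"
| impL: "cf D1 phi \<Longrightarrow> cf (fill C (Semi D2 (BForm psi))) chi \<Longrightarrow>
          cf (fill C (Semi (Semi D1 D2) (BForm (FImp phi psi)))) chi"
| botL: "cf (fill C (BForm FBot)) phi"
| orR1: "cf D phi \<Longrightarrow> cf D (FOr phi psi)"
| orR2: "cf D psi \<Longrightarrow> cf D (FOr phi psi)"
| orL: "cf (fill C (BForm phi)) chi \<Longrightarrow> cf (fill C (BForm psi)) chi \<Longrightarrow> cf (fill C (BForm (FOr phi psi))) chi"

end

theory Submission
  imports Defs
begin

lemma wand_inv:
  "cf D chi \<Longrightarrow> chi = FWand phi psi \<Longrightarrow> cf (Comma D (BForm phi)) psi"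
proof (induction D chi arbitrary: phi psi rule: cf.induct)
  case (equiv D' chi D)
  have "beq (fill (CommaL Hole (BForm phi)) D) (fill (CommaL Hole (BForm phi)) D')"
    using equiv by (intro beq.ctx) simp
  then show ?case using equiv cf.equiv by simp
next
  case (weakS C D1 chi D2)
  then show ?case using cf.weakS[of "CommaL C (BForm phi)" D1 psi D2] by simp
next
  case (contrS C D1 chi)
  then show ?case using cf.contrS[of "CommaL C (BForm phi)" D1 psi] by simp
next
  case (empL C chi)
  then show ?case using cf.empL[of "CommaL C (BForm phi)" psi] by simp
next
  case (starL C a b chi)
  then show ?case using cf.starL[of "CommaL C (BForm phi)" a b psi] by simp
next
  case (wandL D1 a C D2 b chi)
  then show ?case using cf.wandL[of D1 a "CommaL C (BForm phi)" D2 b psi] by simp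
next
  case (topL C chi)
  then show ?case using cf.topL[of "CommaL C (BForm phi)" psi] by simp
next
  case (andL C a b chi)
  then show ?case using cf.andL[of "CommaL C (BForm phi)" a b psi] by simp
next
  case (impL D1 a C D2 b chi)
  then show ?case using cf.impL[of D1 a "CommaL C (BForm phi)" D2 b psi] by simp
next
  case (botL C chi)
  then show ?case using cf.botL[of "CommaL C (BForm phi)" psi] by simp
next
  case (orL C a chi b)
  then show ?case using cf.orL[of "CommaL C (BForm phi)" a psi b] by simp
qed auto

lemma imp_inv:
  "cf D chi \<Longrightarrow> chi = FImp phi psi \<Longrightarrow> cf (Semi D (BForm phi)) psi"
proof (induction D chi arbitrary: phi psi rule: cf.induct)
  case (equiv D' chi D)
  have "beq (fill (SemiL Hole (BForm phi)) D) (fill (SemiL Hole (BForm phi)) D')"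
    using equiv by (intro beq.ctx) simp
  then show ?case using equiv cf.equiv by simp
next
  case (weakS C D1 chi D2)
  then show ?case using cf.weakS[of "SemiL C (BForm phi)" D1 psi D2] by simp
next
  case (contrS C D1 chi)
  then show ?case using cf.contrS[of "SemiL C (BForm phi)" D1 psi] by simp
next
  case (empL C chi)
  then show ?case using cf.empL[of "SemiL C (BForm phi)" psi] by simp
next
  case (starL C a b chi)
  then show ?case using cf.starL[of "SemiL C (BForm phi)" a b psi] by simp
next
  case (wandL D1 a C D2 b chi)
  then show ?case using cf.wandL[of D1 a "SemiL C (BForm phi)" D2 b psi] by simp
next
  case (topL C chi)
  then show ?case using cf.topL[of "SemiL C (BForm phi)" psi] by simp
next
  case (andL C a b chi)
  then show ?case using cf.andL[of "SemiL C (BForm phi)" a b psi] by simp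
next
  case (impL D1 a C D2 b chi)
  then show ?case using cf.impL[of D1 a "SemiL C (BForm phi)" D2 b psi] by simp
next
  case (botL C chi)
  then show ?case using cf.botL[of "SemiL C (BForm phi)" psi] by simp
next
  case (orL C a chi b)
  then show ?case using cf.orL[of "SemiL C (BForm phi)" a psi b] by simp
qed auto

theorem lemma3p2:
  fixes D :: "'a bunch" and phi psi :: "'a form"
  shows "(cf D (FWand phi psi) \<longrightarrow> cf (Comma D (BForm phi)) psi)
       \<and> (cf D (FImp phi psi) \<longrightarrow> cf (Semi D (BForm phi)) psi)"
  using wand_inv imp_inv by blast

end
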